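(* Let $M$ be a graded $R$-module. The following are equivalent: (1) $qp.Spec_g(M)$ with the quasi-Zariski topology is a $T_0$-space. (2) For all $Q,P\in qp.Spec_g(M)$, if $qp\text{-}V_M^g(Q)=qp\text{-}V_M^g(P)$ then $Q=P$. (3) $|qp.Spec_g^p(M)|\le 1$ for every $p\in Spec_g(R)$. (4) The natural map $\varphi$ is injective.
   Context: $R=\bigoplus_{g\in G}R_g$ is a graded commutative ring with identity graded by a group $G$, $h(R)=\bigcup_g R_g$; $M$ is a graded $R$-module, $h(M)$ its homogeneous elements. $Gr(I)$ is the graded radical of a graded ideal $I$. $Spec_g(R)$: graded prime ideals. $(K:_RM)=\{r: rM\subseteq K\}$. Graded prime submodule: proper graded $P$ with $rm\in P$ ($r\in h(R), m\in h(M)$) implying $m\in P$ or $r\in(P:_RM)$. $Gr_M(K)$: intersection of graded prime submodules containing $K$ ($M$ if none). Graded primeful property of $K$: for each graded prime $p\supseteq(K:_RM)$ there is a graded prime submodule $P\supseteq K$ with $(P:_RM)=p$. Graded quasi-primary submodule: proper graded $Q$ with $rm\in Q$ ($r\in h(R),m\in h(M)$) implying $r\in Gr((Q:_RM))$ or $m\in Gr_M(Q)$. $qp.Spec_g(M)$: graded quasi-primary submodules with the graded primeful property; $qp.Spec_g^p(M)=\{Q\in qp.Spec_g(M): Gr((Q:_RM))=p\}$. $qp\text{-}V_M^g(K)=\{Q\in qp.Spec_g(M): Gr((Q:_RM))\supseteq Gr((K:_RM))\}$; the quasi-Zariski topology has closed sets exactly these. $\overline R=R/\mathrm{Ann}(M)$.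 For $Q\in qp.Spec_g(M)$, $(Gr_M(Q):_RM)=Gr((Q:_RM))$ is a graded prime ideal of $R$ containing $\mathrm{Ann}(M)$; the natural map $\varphi:qp.Spec_g(M)\to Spec_g(\overline R)$ is $\varphi(Q)=(Gr_M(Q):_RM)/\mathrm{Ann}(M)$. *)

theory Defs
  imports Main
begin

text \<open>Gradings are given by families indexed by a group 'g (written additively,
  not assumed commutative).  The ring R is the type 'r (commutative with 1),
  the module M is the whole type 'm with scalar action sm.\<close>

definition finsupp :: "('g \<Rightarrow> 'a::zero) \<Rightarrow> bool" where
  "finsupp c \<longleftrightarrow> finite {g. c g \<noteq> 0}"

definition gsum :: "('g \<Rightarrow> 'a::comm_monoid_add) \<Rightarrow> 'a" where
  "gsum c = (\<Sum>g\<in>{g. c g \<noteq> 0}. c g)"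

definition direct_decomp :: "('g \<Rightarrow> 'a::comm_monoid_add set) \<Rightarrow> bool" where
  "direct_decomp A \<longleftrightarrow>
     (\<forall>x. \<exists>!c. finsupp c \<and> (\<forall>g. c g \<in> A g) \<and> x = gsum c)"

definition add_subgroup :: "'a::ab_group_add set \<Rightarrow> bool" where
  "add_subgroup S \<longleftrightarrow> 0 \<in> S \<and> (\<forall>x\<in>S. \<forall>y\<in>S. x + y \<in> S \<and> x - y \<in> S)"

definition graded_ring :: "('g::group_add \<Rightarrow> 'r::comm_ring_1 set) \<Rightarrow> bool" where
  "graded_ring Rg \<longleftrightarrow>
     (\<forall>g. add_subgroup (Rg g)) \<and>
     (\<forall>g h. \<forall>a\<in>Rg g. \<forall>b\<in>Rg h. a * b \<in> Rg (g + h)) \<and>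
     direct_decomp Rg"

definition module_action :: "('r::comm_ring_1 \<Rightarrow> 'm::ab_group_add \<Rightarrow> 'm) \<Rightarrow> bool" where
  "module_action sm \<longleftrightarrow>
     (\<forall>a b m. sm (a + b) m = sm a m + sm b m) \<and>
     (\<forall>a m n. sm a (m + n) = sm a m + sm a n) \<and>
     (\<forall>a b m. sm (a * b) m = sm a (sm b m)) \<and>
     (\<forall>m. sm 1 m = m)"

definition graded_module ::
  "('g::group_add \<Rightarrow> 'r::comm_ring_1 set) \<Rightarrow> ('g \<Rightarrow> 'm::ab_group_add set)
    \<Rightarrow> ('r \<Rightarrow> 'm \<Rightarrow> 'm) \<Rightarrow> bool" where
  "graded_module Rg Mg sm \<longleftrightarrow>
     graded_ring Rg \<and> module_action sm \<and>
     (\<forall>g. add_subgroup (Mg g)) \<and>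
     (\<forall>g h. \<forall>a\<in>Rg g. \<forall>m\<in>Mg h. sm a m \<in> Mg (g + h)) \<and>
     direct_decomp Mg"

definition hom :: "('g \<Rightarrow> 'a set) \<Rightarrow> 'a set" where
  "hom A = (\<Union>g. A g)"

definition graded_ideal :: "('g \<Rightarrow> 'r::comm_ring_1 set) \<Rightarrow> 'r set \<Rightarrow> bool" where
  "graded_ideal Rg I \<longleftrightarrow>
     add_subgroup I \<and> (\<forall>r. \<forall>x\<in>I. r * x \<in> I) \<and>
     (\<forall>x\<in>I. \<exists>c. finsupp c \<and> (\<forall>g. c g \<in> Rg g \<inter> I) \<and> x = gsum c)"

definition graded_submodule ::
  "('g \<Rightarrow> 'm::ab_group_add set) \<Rightarrow> ('r \<Rightarrow> 'm \<Rightarrow> 'm) \<Rightarrow> 'm set \<Rightarrow> bool" where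
  "graded_submodule Mg sm N \<longleftrightarrow>
     add_subgroup N \<and> (\<forall>r. \<forall>x\<in>N. sm r x \<in> N) \<and>
     (\<forall>x\<in>N. \<exists>c. finsupp c \<and> (\<forall>g. c g \<in> Mg g \<inter> N) \<and> x = gsum c)"

definition graded_radical :: "('g \<Rightarrow> 'r::comm_ring_1 set) \<Rightarrow> 'r set \<Rightarrow> 'r set" where
  "graded_radical Rg I =
     {x. \<exists>c. finsupp c \<and> (\<forall>g. c g \<in> Rg g) \<and> x = gsum c \<and>
            (\<forall>g. \<exists>n>0. c g ^ n \<in> I)}"

definition graded_prime_ideal :: "('g \<Rightarrow> 'r::comm_ring_1 set) \<Rightarrow> 'r set \<Rightarrow> bool" where
  "graded_prime_ideal Rg P \<longleftrightarrow>
     graded_ideal Rg P \<and> P \<noteq> UNIV \<and>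
     (\<forall>a\<in>hom Rg. \<forall>b\<in>hom Rg. a * b \<in> P \<longrightarrow> a \<in> P \<or> b \<in> P)"

definition colon :: "('r \<Rightarrow> 'm \<Rightarrow> 'm) \<Rightarrow> 'm set \<Rightarrow> 'r set" where
  "colon sm K = {r. \<forall>m. sm r m \<in> K}"

definition Ann :: "('r \<Rightarrow> 'm::zero \<Rightarrow> 'm) \<Rightarrow> 'r set" where
  "Ann sm = colon sm {0}"

definition graded_prime_submodule ::
  "('g \<Rightarrow> 'r::comm_ring_1 set) \<Rightarrow> ('g \<Rightarrow> 'm::ab_group_add set)
    \<Rightarrow> ('r \<Rightarrow> 'm \<Rightarrow> 'm) \<Rightarrow> 'm set \<Rightarrow> bool" where
  "graded_prime_submodule Rg Mg sm P \<longleftrightarrow>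
     graded_submodule Mg sm P \<and> P \<noteq> UNIV \<and>
     (\<forall>r\<in>hom Rg. \<forall>m\<in>hom Mg. sm r m \<in> P \<longrightarrow> m \<in> P \<or> r \<in> colon sm P)"

text \<open>Gr_M(K): intersection of graded prime submodules containing K
  (the empty intersection is M = UNIV)\<close>
definition GrM ::
  "('g \<Rightarrow> 'r::comm_ring_1 set) \<Rightarrow> ('g \<Rightarrow> 'm::ab_group_add set)
    \<Rightarrow> ('r \<Rightarrow> 'm \<Rightarrow> 'm) \<Rightarrow> 'm set \<Rightarrow> 'm set" where
  "GrM Rg Mg sm K = \<Inter>{P. graded_prime_submodule Rg Mg sm P \<and> K \<subseteq> P}"

definition graded_primeful ::
  "('g \<Rightarrow> 'r::comm_ring_1 set) \<Rightarrow> ('g \<Rightarrow> 'm::ab_group_add set)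
    \<Rightarrow> ('r \<Rightarrow> 'm \<Rightarrow> 'm) \<Rightarrow> 'm set \<Rightarrow> bool" where
  "graded_primeful Rg Mg sm K \<longleftrightarrow>
     (\<forall>p. graded_prime_ideal Rg p \<and> colon sm K \<subseteq> p \<longrightarrow>
        (\<exists>P. graded_prime_submodule Rg Mg sm P \<and> K \<subseteq> P \<and> colon sm P = p))"

definition graded_quasi_primary ::
  "('g \<Rightarrow> 'r::comm_ring_1 set) \<Rightarrow> ('g \<Rightarrow> 'm::ab_group_add set)
    \<Rightarrow> ('r \<Rightarrow> 'm \<Rightarrow> 'm) \<Rightarrow> 'm set \<Rightarrow> bool" where
  "graded_quasi_primary Rg Mg sm Q \<longleftrightarrow>
     graded_submodule Mg sm Q \<and> Q \<noteq> UNIV \<and>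
     (\<forall>r\<in>hom Rg. \<forall>m\<in>hom Mg. sm r m \<in> Q \<longrightarrow>
        r \<in> graded_radical Rg (colon sm Q) \<or> m \<in> GrM Rg Mg sm Q)"

definition qpSpec ::
  "('g \<Rightarrow> 'r::comm_ring_1 set) \<Rightarrow> ('g \<Rightarrow> 'm::ab_group_add set)
    \<Rightarrow> ('r \<Rightarrow> 'm \<Rightarrow> 'm) \<Rightarrow> 'm set set" where
  "qpSpec Rg Mg sm = {Q. graded_quasi_primary Rg Mg sm Q \<and> graded_primeful Rg Mg sm Q}"

definition qpSpec_at ::
  "('g \<Rightarrow> 'r::comm_ring_1 set) \<Rightarrow> ('g \<Rightarrow> 'm::ab_group_add set)
    \<Rightarrow> ('r \<Rightarrow> 'm \<Rightarrow> 'm) \<Rightarrow> 'r set \<Rightarrow> 'm set set" where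
  "qpSpec_at Rg Mg sm p = {Q \<in> qpSpec Rg Mg sm. graded_radical Rg (colon sm Q) = p}"

definition qpV ::
  "('g \<Rightarrow> 'r::comm_ring_1 set) \<Rightarrow> ('g \<Rightarrow> 'm::ab_group_add set)
    \<Rightarrow> ('r \<Rightarrow> 'm \<Rightarrow> 'm) \<Rightarrow> 'm set \<Rightarrow> 'm set set" where
  "qpV Rg Mg sm K = {Q \<in> qpSpec Rg Mg sm.
      graded_radical Rg (colon sm K) \<subseteq> graded_radical Rg (colon sm Q)}"

definition qp_closed ::
  "('g \<Rightarrow> 'r::comm_ring_1 set) \<Rightarrow> ('g \<Rightarrow> 'm::ab_group_add set)
    \<Rightarrow> ('r \<Rightarrow> 'm \<Rightarrow> 'm) \<Rightarrow> 'm set set \<Rightarrow> bool" where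
  "qp_closed Rg Mg sm C \<longleftrightarrow> (\<exists>K. graded_submodule Mg sm K \<and> C = qpV Rg Mg sm K)"

text \<open>T0 axiom for the quasi-Zariski topology, phrased with closed sets
  (complements of open sets): any two distinct points are separated by a
  closed set containing exactly one of them.\<close>
definition qp_T0 ::
  "('g \<Rightarrow> 'r::comm_ring_1 set) \<Rightarrow> ('g \<Rightarrow> 'm::ab_group_add set)
    \<Rightarrow> ('r \<Rightarrow> 'm \<Rightarrow> 'm) \<Rightarrow> bool" where
  "qp_T0 Rg Mg sm \<longleftrightarrow>
     (\<forall>Q\<in>qpSpec Rg Mg sm. \<forall>P\<in>qpSpec Rg Mg sm. Q \<noteq> P \<longrightarrow>
        (\<exists>C. qp_closed Rg Mg sm C \<and> (Q \<in> C \<longleftrightarrow> P \<notin> C)))"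

text \<open>the natural map phi: Q \<mapsto> (Gr_M(Q) :_R M) / Ann(M), the quotient ideal
  represented as the set of its cosets r + Ann(M)\<close>
definition qp_phi ::
  "('g \<Rightarrow> 'r::comm_ring_1 set) \<Rightarrow> ('g \<Rightarrow> 'm::ab_group_add set)
    \<Rightarrow> ('r \<Rightarrow> 'm \<Rightarrow> 'm) \<Rightarrow> 'm set \<Rightarrow> 'r set set" where
  "qp_phi Rg Mg sm Q =
     (\<lambda>r. {r + a | a. a \<in> Ann sm}) ` colon sm (GrM Rg Mg sm Q)"

end

theory Submission
  imports Defs
begin


lemma gsum_eq_sum:
  assumes "finsupp c" "finite F" "{g. c g \<noteq> 0} \<subseteq> F"
  shows "gsum c = sum c F"
  unfolding gsum_def using assms by (intro sum.mono_neutral_left) auto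

lemma finsupp_add: "finsupp c \<Longrightarrow> finsupp d \<Longrightarrow> finsupp (\<lambda>g. (c g::'a::monoid_add) + d g)"
  unfolding finsupp_def
  by (rule finite_subset[of _ "{g. c g \<noteq> 0} \<union> {g. d g \<noteq> 0}"]) auto

lemma gsum_add:
  assumes "finsupp c" "finsupp d"
  shows "gsum (\<lambda>g. c g + d g) = gsum c + gsum d"
proof -
  let ?F = "{g. c g \<noteq> 0} \<union> {g. d g \<noteq> 0}"
  have f: "finite ?F" using assms unfolding finsupp_def by auto
  have "gsum (\<lambda>g. c g + d g) = sum (\<lambda>g. c g + d g) ?F"
    by (rule gsum_eq_sum[OF finsupp_add[OF assms] f]) auto
  also have "\<dots> = sum c ?F + sum d ?F" by (rule sum.distrib)
  also have "\<dots> = gsum c + gsum d"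
    using gsum_eq_sum[OF assms(1) f] gsum_eq_sum[OF assms(2) f] by auto
  finally show ?thesis .
qed

definition single :: "'g \<Rightarrow> 'a::zero \<Rightarrow> 'g \<Rightarrow> 'a" where
  "single h x = (\<lambda>g. if g = h then x else 0)"

lemma finsupp_single: "finsupp (single h x)"
  unfolding finsupp_def single_def
  by (rule finite_subset[of _ "{h}"]) auto

lemma gsum_single: "gsum (single h (x::'a::comm_monoid_add)) = x"
proof -
  have "gsum (single h x) = sum (single h x) {h}"
    by (rule gsum_eq_sum[OF finsupp_single]) (auto simp: single_def)
  then show ?thesis by (simp add: single_def)
qed

lemma single_in: "x \<in> A h \<Longrightarrow> (\<forall>g. 0 \<in> A g) \<Longrightarrow> single h x g \<in> A g"
  by (auto simp: single_def)

lemma dd_unique: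
  assumes "direct_decomp A" "finsupp c" "\<forall>g. c g \<in> A g" "finsupp d" "\<forall>g. d g \<in> A g"
    "gsum c = gsum d"
  shows "c = d"
  using assms unfolding direct_decomp_def by metis

lemma dd_ex:
  assumes "direct_decomp A"
  obtains c where "finsupp c" "\<forall>g. c g \<in> A g" "x = gsum c"
  using assms unfolding direct_decomp_def by metis

lemma dd_hom:
  assumes "direct_decomp A" "\<forall>g. 0 \<in> A g" "x \<in> A h"
    "finsupp c" "\<forall>g. c g \<in> A g" "x = gsum c"
  shows "c = single h x"
proof (rule dd_unique[OF assms(1,4,5) finsupp_single])
  show "\<forall>g. single h x g \<in> A g" using assms single_in by metis
  show "gsum c = gsum (single h x)" unfolding gsum_single using assms by simp
qed

lemma as_zero: "add_subgroup S \<Longrightarrow> 0 \<in> S"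
  by (simp add: add_subgroup_def)
lemma as_add: "add_subgroup S \<Longrightarrow> x \<in> S \<Longrightarrow> y \<in> S \<Longrightarrow> x + y \<in> S"
  by (simp add: add_subgroup_def)
lemma as_diff: "add_subgroup S \<Longrightarrow> x \<in> S \<Longrightarrow> y \<in> S \<Longrightarrow> x - y \<in> S"
  by (simp add: add_subgroup_def)

lemma as_sum: "add_subgroup S \<Longrightarrow> (\<And>x. x \<in> F \<Longrightarrow> f x \<in> S) \<Longrightarrow> sum f F \<in> S"
proof (induction F rule: infinite_finite_induct)
  case (infinite A) then show ?case by (simp add: as_zero)
next
  case empty then show ?case by (simp add: as_zero)
next
  case (insert x F) then show ?case by (simp add: as_add)
qed

lemma gsum_in: "add_subgroup S \<Longrightarrow> (\<And>g. c g \<in> S) \<Longrightarrow> gsum c \<in> S"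
  unfolding gsum_def by (rule as_sum) auto



locale gmod =
  fixes Rg :: "'g::group_add \<Rightarrow> 'r::comm_ring_1 set"
    and Mg :: "'g \<Rightarrow> 'm::ab_group_add set"
    and sm :: "'r \<Rightarrow> 'm \<Rightarrow> 'm"
  assumes gm: "graded_module Rg Mg sm"
begin

lemma sm_add_left: "sm (a + b) m = sm a m + sm b m"
  using gm unfolding graded_module_def module_action_def by blast
lemma sm_add_right: "sm a (m + n) = sm a m + sm a n"
  using gm unfolding graded_module_def module_action_def by blast
lemma sm_mult: "sm (a * b) m = sm a (sm b m)"
  using gm unfolding graded_module_def module_action_def by blast
lemma sm_one: "sm 1 m = m"
  using gm unfolding graded_module_def module_action_def by blast
lemma sm_zero_left[simp]: "sm 0 m = 0"
  using sm_add_left[of 0 0 m] by simp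
lemma sm_zero_right[simp]: "sm a 0 = 0"
  using sm_add_right[of a 0 0] by simp
lemma sm_diff_left: "sm (a - b) m = sm a m - sm b m"
  using sm_add_left[of "a - b" b m] by (simp add: algebra_simps)
lemma sm_sum_left: "sm (sum f F) m = sum (\<lambda>x. sm (f x) m) F"
  by (induction F rule: infinite_finite_induct) (auto simp: sm_add_left)
lemma sm_sum_right: "sm r (sum f F) = sum (\<lambda>x. sm r (f x)) F"
  by (induction F rule: infinite_finite_induct) (auto simp: sm_add_right)

lemma gr: "graded_ring Rg" using gm unfolding graded_module_def by blast
lemma Rsub: "add_subgroup (Rg g)" using gr unfolding graded_ring_def by blast
lemma Rmult: "a \<in> Rg g \<Longrightarrow> b \<in> Rg h \<Longrightarrow> a * b \<in> Rg (g + h)"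
  using gr unfolding graded_ring_def by blast
lemma ddR: "direct_decomp Rg" using gr unfolding graded_ring_def by blast
lemma Msub: "add_subgroup (Mg g)" using gm unfolding graded_module_def by blast
lemma smdeg: "a \<in> Rg g \<Longrightarrow> m \<in> Mg h \<Longrightarrow> sm a m \<in> Mg (g + h)"
  using gm unfolding graded_module_def by blast
lemma ddM: "direct_decomp Mg" using gm unfolding graded_module_def by blast
lemma R0: "\<forall>g. 0 \<in> Rg g" using Rsub as_zero by blast
lemma M0: "\<forall>g. 0 \<in> Mg g" using Msub as_zero by blast

lemma sm_decomp:
  assumes m: "m \<in> Mg h" and c: "finsupp c" "\<forall>g. c g \<in> Rg g" "r = gsum c"
  shows "finsupp (\<lambda>k. sm (c (k - h)) m) \<and> (\<forall>k. sm (c (k - h)) m \<in> Mg k)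
     \<and> sm r m = gsum (\<lambda>k. sm (c (k - h)) m)"
proof -
  let ?d = "\<lambda>k. sm (c (k - h)) m"
  let ?S = "{g. c g \<noteq> 0}"
  have fS: "finite ?S" using c unfolding finsupp_def by simp
  have sub: "{k. ?d k \<noteq> 0} \<subseteq> (\<lambda>g. g + h) ` ?S"
  proof
    fix k assume "k \<in> {k. ?d k \<noteq> 0}"
    then have "c (k - h) \<noteq> 0" by (auto)
    moreover have "k = (k - h) + h" by simp
    ultimately show "k \<in> (\<lambda>g. g + h) ` ?S" by blast
  qed
  have fd: "finsupp ?d" unfolding finsupp_def using sub fS finite_subset by blast
  have deg: "\<forall>k. ?d k \<in> Mg k"
  proof
    fix k
    have "sm (c (k - h)) m \<in> Mg ((k - h) + h)" using smdeg c(2) m by blast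
    then show "?d k \<in> Mg k" by simp
  qed
  have inj: "inj_on (\<lambda>g. g + h) ?S" by (auto simp: inj_on_def)
  have "gsum ?d = sum ?d ((\<lambda>g. g + h) ` ?S)"
    by (rule gsum_eq_sum[OF fd _ sub]) (use fS in simp)
  also have "\<dots> = sum (\<lambda>g. ?d (g + h)) ?S" by (subst sum.reindex[OF inj]) simp
  also have "\<dots> = sum (\<lambda>g. sm (c g) m) ?S" by simp
  also have "\<dots> = sm r m" unfolding c(3) gsum_def sm_sum_left ..
  finally show ?thesis using fd deg by simp
qed

lemma hom_all:
  assumes N: "add_subgroup N" and h: "\<And>m. m \<in> hom Mg \<Longrightarrow> sm r m \<in> N"
  shows "sm r m \<in> N"
proof -
  obtain f where f: "finsupp f" "\<forall>g. f g \<in> Mg g" "m = gsum f" using dd_ex[OF ddM] by blast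
  have "sm r m = sum (\<lambda>g. sm r (f g)) {g. f g \<noteq> 0}"
    unfolding f(3) gsum_def sm_sum_right ..
  also have "\<dots> \<in> N" by (rule as_sum[OF N]) (use h f(2) in \<open>auto simp: hom_def\<close>)
  finally show ?thesis .
qed

lemma gsub_sub: "graded_submodule Mg sm N \<Longrightarrow> add_subgroup N"
  unfolding graded_submodule_def by blast

lemma colon_graded:
  assumes N: "graded_submodule Mg sm N"
  shows "graded_ideal Rg (colon sm N)"
proof -
  have NS: "add_subgroup N" using N gsub_sub by blast
  have Nsm: "\<And>r x. x \<in> N \<Longrightarrow> sm r x \<in> N" using N unfolding graded_submodule_def by blast
  have as: "add_subgroup (colon sm N)"
    unfolding add_subgroup_def colon_def
    using NS by (auto simp: sm_add_left sm_diff_left as_zero as_add as_diff)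
  have id: "\<forall>r. \<forall>x\<in>colon sm N. r * x \<in> colon sm N"
    unfolding colon_def by (auto simp: sm_mult mult.commute[of _ "_::'r"] Nsm)
  have comp: "\<exists>c. finsupp c \<and> (\<forall>g. c g \<in> Rg g \<inter> colon sm N) \<and> x = gsum c"
    if x: "x \<in> colon sm N" for x
  proof -
    obtain c where c: "finsupp c" "\<forall>g. c g \<in> Rg g" "x = gsum c" using dd_ex[OF ddR] by blast
    have "c g \<in> colon sm N" for g
      unfolding colon_def
    proof (safe, rule hom_all[OF NS])
      fix m assume "m \<in> hom Mg"
      then obtain h where m: "m \<in> Mg h" unfolding hom_def by blast
      note D = sm_decomp[OF m c]
      have "sm x m \<in> N" using x unfolding colon_def by blast
      then obtain e where e: "finsupp e" "\<forall>g. e g \<in> Mg g \<inter> N" "sm x m = gsum e"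
        using N unfolding graded_submodule_def by blast
      have "(\<lambda>k. sm (c (k - h)) m) = e"
        by (rule dd_unique[OF ddM]) (use D e in auto)
      then have "sm (c ((g + h) - h)) m = e (g + h)" by metis
      then show "sm (c g) m \<in> N" using e(2) by simp
    qed
    then show ?thesis using c by blast
  qed
  show ?thesis unfolding graded_ideal_def using as id comp by blast
qed

lemma hom_mult: "a \<in> hom Rg \<Longrightarrow> b \<in> hom Rg \<Longrightarrow> a * b \<in> hom Rg"
  unfolding hom_def using Rmult by blast
lemma hom_sm: "a \<in> hom Rg \<Longrightarrow> m \<in> hom Mg \<Longrightarrow> sm a m \<in> hom Mg"
  unfolding hom_def using smdeg by blast
lemma hom_pow: "a \<in> hom Rg \<Longrightarrow> n > 0 \<Longrightarrow> a ^ n \<in> hom Rg"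
proof (induction n)
  case 0 then show ?case by simp
next
  case (Suc n)
  show ?case
  proof (cases "n = 0")
    case True then show ?thesis using Suc.prems by simp
  next
    case False
    then have "a ^ n \<in> hom Rg" using Suc by simp
    then have "a * a ^ n \<in> hom Rg" using hom_mult[OF Suc.prems(1)] by blast
    then show ?thesis by simp
  qed
qed

lemma colon_prime:
  assumes P: "graded_prime_submodule Rg Mg sm P"
  shows "graded_prime_ideal Rg (colon sm P)"
proof -
  have Pg: "graded_submodule Mg sm P" and PU: "P \<noteq> UNIV"
    and Pp: "\<And>r m. r \<in> hom Rg \<Longrightarrow> m \<in> hom Mg \<Longrightarrow> sm r m \<in> P \<Longrightarrow> m \<in> P \<or> r \<in> colon sm P"
    using P unfolding graded_prime_submodule_def by blast+
  have NS: "add_subgroup P" using Pg gsub_sub by blast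
  have "1 \<notin> colon sm P" using PU unfolding colon_def by (auto simp: sm_one)
  then have U: "colon sm P \<noteq> UNIV" by blast
  have pr: "a \<in> colon sm P \<or> b \<in> colon sm P"
    if a: "a \<in> hom Rg" and b: "b \<in> hom Rg" and ab: "a * b \<in> colon sm P" for a b
  proof (cases "a \<in> colon sm P")
    case True then show ?thesis by blast
  next
    case na: False
    have "b \<in> colon sm P" unfolding colon_def
    proof (safe, rule hom_all[OF NS])
      fix m assume m: "m \<in> hom Mg"
      have "sm a (sm b m) \<in> P" using ab unfolding colon_def by (simp add: sm_mult[symmetric])
      then show "sm b m \<in> P" using Pp[OF a hom_sm[OF b m]] na by blast
    qed
    then show ?thesis by blast
  qed
  show ?thesis unfolding graded_prime_ideal_def using colon_graded[OF Pg] U pr by blast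
qed

end



lemma gmod_self: "graded_ring Rg \<Longrightarrow> gmod Rg Rg (*)"
  unfolding gmod_def graded_module_def graded_ring_def module_action_def
  by (auto simp: algebra_simps)

lemma gideal_sub: "graded_ideal Rg I \<longleftrightarrow> graded_submodule Rg (*) I"
  unfolding graded_ideal_def graded_submodule_def by blast

context gmod begin

lemma R: "gmod Rg Rg (*)" using gmod_self[OF gr] .

lemma gi_sub: "graded_ideal Rg I \<Longrightarrow> add_subgroup I"
  unfolding graded_ideal_def by blast
lemma gi_mult: "graded_ideal Rg I \<Longrightarrow> x \<in> I \<Longrightarrow> r * x \<in> I"
  unfolding graded_ideal_def by blast
lemma gi_comp: "graded_ideal Rg I \<Longrightarrow> x \<in> I \<Longrightarrow>
   \<exists>c. finsupp c \<and> (\<forall>g. c g \<in> Rg g \<inter> I) \<and> x = gsum c"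
  unfolding graded_ideal_def by blast

lemma prime_pow:
  assumes p: "graded_prime_ideal Rg p" and a: "a \<in> hom Rg"
  shows "n > 0 \<Longrightarrow> a ^ n \<in> p \<Longrightarrow> a \<in> p"
proof (induction n)
  case 0 then show ?case by simp
next
  case (Suc n)
  show ?case
  proof (cases n)
    case 0 then show ?thesis using Suc by simp
  next
    case (Suc k)
    have "0 < n" using Suc by simp
    then have h: "a ^ n \<in> hom Rg" using hom_pow[OF a] by blast
    have "a * a ^ n \<in> p" using \<open>a ^ Suc n \<in> p\<close> by simp
    then have "a \<in> p \<or> a ^ n \<in> p" using p a h unfolding graded_prime_ideal_def by blast
    then show ?thesis using Suc.IH Suc by blast
  qed
qed

lemma rad_sub:
  assumes x: "x \<in> graded_radical Rg I" and Ip: "I \<subseteq> p" and p: "graded_prime_ideal Rg p"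
  shows "x \<in> p"
proof -
  obtain c where c: "finsupp c" "\<forall>g. c g \<in> Rg g" "x = gsum c" "\<forall>g. \<exists>n>0. c g ^ n \<in> I"
    using x unfolding graded_radical_def by blast
  have "c g \<in> p" for g
  proof -
    obtain n where "n > 0" "c g ^ n \<in> p" using c(4) Ip by blast
    moreover have "c g \<in> hom Rg" using c(2) unfolding hom_def by blast
    ultimately show ?thesis using prime_pow[OF p] by blast
  qed
  moreover have "add_subgroup p" using p unfolding graded_prime_ideal_def graded_ideal_def by blast
  ultimately show ?thesis using gsum_in c(3) by metis
qed

lemma ext_ideal:
  assumes J: "graded_ideal Rg J" and a: "a \<in> hom Rg"
  shows "graded_ideal Rg {j + r * a | j r. j \<in> J}"
proof -
  let ?Ja = "{j + r * a | j r. j \<in> J}"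
  have JS: "add_subgroup J" using J gi_sub by blast
  have as: "add_subgroup ?Ja"
    unfolding add_subgroup_def
  proof (intro conjI ballI)
    show "0 \<in> ?Ja" using as_zero[OF JS] by (auto intro!: exI[of _ 0])
  next
    fix x y assume "x \<in> ?Ja" "y \<in> ?Ja"
    then obtain j1 r1 j2 r2 where "x = j1 + r1 * a" "y = j2 + r2 * a" "j1 \<in> J" "j2 \<in> J" by blast
    have "x + y = (j1 + j2) + (r1 + r2) * a" "j1 + j2 \<in> J"
      using \<open>x = _\<close> \<open>y = _\<close> as_add[OF JS] \<open>j1 \<in> J\<close> \<open>j2 \<in> J\<close> by (auto simp: algebra_simps)
    then show "x + y \<in> ?Ja" by blast
    have "x - y = (j1 - j2) + (r1 - r2) * a" "j1 - j2 \<in> J"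
      using \<open>x = _\<close> \<open>y = _\<close> as_diff[OF JS] \<open>j1 \<in> J\<close> \<open>j2 \<in> J\<close> by (auto simp: algebra_simps)
    then show "x - y \<in> ?Ja" by blast
  qed
  have id: "\<forall>t. \<forall>y\<in>?Ja. t * y \<in> ?Ja"
  proof (intro allI ballI)
    fix t y assume "y \<in> ?Ja"
    then obtain j r where "y = j + r * a" "j \<in> J" by blast
    then have "t * y = t * j + (t * r) * a" "t * j \<in> J" using gi_mult[OF J]
      by (auto simp: algebra_simps)
    then show "t * y \<in> ?Ja" by blast
  qed
  have comp: "\<exists>c. finsupp c \<and> (\<forall>g. c g \<in> Rg g \<inter> ?Ja) \<and> y = gsum c" if "y \<in> ?Ja" for y
  proof -
    obtain j r where y: "y = j + r * a" "j \<in> J" using \<open>y \<in> ?Ja\<close> by blast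
    obtain e where e: "finsupp e" "\<forall>g. e g \<in> Rg g \<inter> J" "j = gsum e" using gi_comp[OF J y(2)] by blast
    obtain h where ah: "a \<in> Rg h" using a unfolding hom_def by blast
    obtain c where c: "finsupp c" "\<forall>g. c g \<in> Rg g" "r = gsum c" using dd_ex[OF ddR] by blast
    note D = gmod.sm_decomp[OF R ah c]
    let ?f = "\<lambda>k. e k + c (k - h) * a"
    have "finsupp ?f" using finsupp_add[of e "\<lambda>k. c (k - h) * a"] e D by blast
    moreover have "y = gsum ?f" using gsum_add[of e "\<lambda>k. c (k - h) * a"] e D y by simp
    moreover have "\<forall>k. ?f k \<in> Rg k \<inter> ?Ja"
      using e(2) D as_add[OF Rsub] by blast
    ultimately show ?thesis by blast
  qed
  show ?thesis unfolding graded_ideal_def using as id comp by blast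
qed

lemma zorn_prime:
  assumes I: "graded_ideal Rg I" and x: "\<forall>n>0. x ^ n \<notin> I"
  shows "\<exists>p. graded_prime_ideal Rg p \<and> I \<subseteq> p \<and> x \<notin> p"
proof -
  define F where "F = {J. graded_ideal Rg J \<and> I \<subseteq> J \<and> (\<forall>n>0. x ^ n \<notin> J)}"
  have "\<exists>M\<in>F. \<forall>X\<in>F. M \<subseteq> X \<longrightarrow> X = M"
  proof (rule subset_Zorn_nonempty)
    show "F \<noteq> {}" using I x unfolding F_def by blast
  next
    fix C assume Cne: "C \<noteq> {}" and ch: "subset.chain F C"
    have CF: "C \<subseteq> F" and tot: "\<forall>X\<in>C. \<forall>Y\<in>C. X \<subseteq> Y \<or> Y \<subseteq> X"
      using ch unfolding subset_chain_def by blast+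
    have gC: "\<And>J. J \<in> C \<Longrightarrow> graded_ideal Rg J" using CF unfolding F_def by blast
    have as: "add_subgroup (\<Union>C)"
      unfolding add_subgroup_def
    proof (intro conjI ballI)
      show "0 \<in> \<Union>C" using Cne gC gi_sub as_zero by blast
    next
      fix u v assume "u \<in> \<Union>C" "v \<in> \<Union>C"
      then obtain J1 J2 where J: "J1 \<in> C" "J2 \<in> C" "u \<in> J1" "v \<in> J2" by blast
      then have "(u \<in> J1 \<and> v \<in> J1 \<and> J1 \<in> C) \<or> (u \<in> J2 \<and> v \<in> J2 \<and> J2 \<in> C)" using tot by blast
      then show "u + v \<in> \<Union>C" "u - v \<in> \<Union>C" using gC gi_sub as_add as_diff by blast+
    qed
    have id: "\<forall>r. \<forall>u\<in>\<Union>C. r * u \<in> \<Union>C" using gC gi_mult by blast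
    have comp: "\<forall>u\<in>\<Union>C. \<exists>c. finsupp c \<and> (\<forall>g. c g \<in> Rg g \<inter> \<Union>C) \<and> u = gsum c"
    proof
      fix u assume "u \<in> \<Union>C"
      then obtain J where "J \<in> C" "u \<in> J" by blast
      then obtain c where "finsupp c" "\<forall>g. c g \<in> Rg g \<inter> J" "u = gsum c" using gC gi_comp by metis
      then show "\<exists>c. finsupp c \<and> (\<forall>g. c g \<in> Rg g \<inter> \<Union>C) \<and> u = gsum c" using \<open>J \<in> C\<close> by blast
    qed
    have "graded_ideal Rg (\<Union>C)" unfolding graded_ideal_def using as id comp by blast
    moreover have "I \<subseteq> \<Union>C" using Cne CF unfolding F_def by blast
    moreover have "\<forall>n>0. x ^ n \<notin> \<Union>C" using CF unfolding F_def by blast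
    ultimately show "\<Union>C \<in> F" unfolding F_def by blast
  qed
  then obtain J where JF: "J \<in> F" and max: "\<And>X. X \<in> F \<Longrightarrow> J \<subseteq> X \<Longrightarrow> X = J" by blast
  have J: "graded_ideal Rg J" "I \<subseteq> J" "\<forall>n>0. x ^ n \<notin> J" using JF unfolding F_def by blast+
  have xJ: "x \<notin> J" using J(3)[rule_format, of 1] by simp
  have ext: "\<exists>n>0. \<exists>j r. j \<in> J \<and> x ^ n = j + r * a" if a: "a \<in> hom Rg" "a \<notin> J" for a
  proof (rule ccontr)
    assume nn: "\<not> ?thesis"
    let ?Ja = "{j + r * a | j r. j \<in> J}"
    have sub: "J \<subseteq> ?Ja"
    proof
      fix j assume "j \<in> J"
      moreover have "j = j + 0 * a" by simp
      ultimately show "j \<in> ?Ja" by blast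
    qed
    have "a = 0 + 1 * a" by simp
    then have "a \<in> ?Ja" using as_zero[OF gi_sub[OF J(1)]] by blast
    then have ne: "?Ja \<noteq> J" using a by blast
    have "?Ja \<in> F" unfolding F_def using ext_ideal[OF J(1) a(1)] sub J(2) nn by blast
    then show False using max sub ne by blast
  qed
  have pr: "u \<in> J \<or> v \<in> J" if u: "u \<in> hom Rg" and v: "v \<in> hom Rg" and uv: "u * v \<in> J" for u v
  proof (rule ccontr)
    assume "\<not> ?thesis"
    then obtain n j1 r m j2 s where nm: "n > 0" "j1 \<in> J" "x ^ n = j1 + r * u"
      "m > 0" "j2 \<in> J" "x ^ m = j2 + s * v" using ext u v by metis
    have "x ^ (n + m) = x ^ n * x ^ m" by (simp add: power_add)
    also have "\<dots> = (j1 * (j2 + s * v) + (r * u) * j2) + (r * s) * (u * v)"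
      using nm by (simp add: algebra_simps)
    also have "\<dots> \<in> J"
    proof -
      have 1: "j1 * (j2 + s * v) \<in> J" using gi_mult[OF J(1) nm(2), of "j2 + s * v"] by (simp add: mult.commute)
      have 2: "(r * u) * j2 \<in> J" using gi_mult[OF J(1) nm(5)] by blast
      have 3: "(r * s) * (u * v) \<in> J" using gi_mult[OF J(1) uv] by blast
      show ?thesis using 1 2 3 as_add[OF gi_sub[OF J(1)]] by blast
    qed
    finally show False using J(3) nm by simp
  qed
  have "graded_prime_ideal Rg J" unfolding graded_prime_ideal_def using J(1) xJ pr by blast
  then show ?thesis using J(2) xJ by blast
qed

lemma rad_eq:
  assumes I: "graded_ideal Rg I"
  shows "graded_radical Rg I = \<Inter>{p. graded_prime_ideal Rg p \<and> I \<subseteq> p}"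
proof
  show "graded_radical Rg I \<subseteq> \<Inter>{p. graded_prime_ideal Rg p \<and> I \<subseteq> p}"
    using rad_sub by blast
next
  show "\<Inter>{p. graded_prime_ideal Rg p \<and> I \<subseteq> p} \<subseteq> graded_radical Rg I"
  proof
    fix x assume x: "x \<in> \<Inter>{p. graded_prime_ideal Rg p \<and> I \<subseteq> p}"
    obtain c where c: "finsupp c" "\<forall>g. c g \<in> Rg g" "x = gsum c" using dd_ex[OF ddR] by blast
    have "\<exists>n>0. c g ^ n \<in> I" for g
    proof (rule ccontr)
      assume "\<not> ?thesis"
      then obtain p where p: "graded_prime_ideal Rg p" "I \<subseteq> p" "c g \<notin> p"
        using zorn_prime[OF I] by blast
      have "x \<in> p" using x p by blast
      then obtain e where e: "finsupp e" "\<forall>g. e g \<in> Rg g \<inter> p" "x = gsum e"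
        using p(1) gi_comp unfolding graded_prime_ideal_def by blast
      have "e = c" by (rule dd_unique[OF ddR]) (use e c in auto)
      then show False using e(2) p(3) by blast
    qed
    then show "x \<in> graded_radical Rg I" unfolding graded_radical_def using c by blast
  qed
qed

end


context gmod begin

lemma GrM_sub: "graded_submodule Mg sm (GrM Rg Mg sm K)"
proof -
  let ?F = "{P. graded_prime_submodule Rg Mg sm P \<and> K \<subseteq> P}"
  have gF: "\<And>P. P \<in> ?F \<Longrightarrow> graded_submodule Mg sm P"
    unfolding graded_prime_submodule_def by blast
  have asF: "\<And>P. P \<in> ?F \<Longrightarrow> add_subgroup P" using gF gsub_sub by blast
  have as: "add_subgroup (\<Inter>?F)"
    unfolding add_subgroup_def using asF as_zero as_add as_diff by blast
  have smc: "\<forall>r. \<forall>x\<in>\<Inter>?F. sm r x \<in> \<Inter>?F"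
    using gF unfolding graded_submodule_def by blast
  have comp: "\<forall>x\<in>\<Inter>?F. \<exists>c. finsupp c \<and> (\<forall>g. c g \<in> Mg g \<inter> \<Inter>?F) \<and> x = gsum c"
  proof
    fix x assume x: "x \<in> \<Inter>?F"
    obtain c where c: "finsupp c" "\<forall>g. c g \<in> Mg g" "x = gsum c" using dd_ex[OF ddM] by blast
    have "c g \<in> P" if P: "P \<in> ?F" for P g
    proof -
      obtain e where e: "finsupp e" "\<forall>g. e g \<in> Mg g \<inter> P" "x = gsum e"
        using gF[OF P] x P unfolding graded_submodule_def by blast
      have "e = c" by (rule dd_unique[OF ddM]) (use e c in auto)
      then show ?thesis using e(2) by blast
    qed
    then show "\<exists>c. finsupp c \<and> (\<forall>g. c g \<in> Mg g \<inter> \<Inter>?F) \<and> x = gsum c" using c by blast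
  qed
  show ?thesis unfolding GrM_def graded_submodule_def using as smc comp by blast
qed

lemma colon_Inter: "colon sm (\<Inter>F) = \<Inter>(colon sm ` F)"
  unfolding colon_def by auto

lemma colonGrM:
  assumes Q: "graded_submodule Mg sm Q" and pf: "graded_primeful Rg Mg sm Q"
  shows "colon sm (GrM Rg Mg sm Q) = graded_radical Rg (colon sm Q)"
proof -
  have eq: "colon sm ` {P. graded_prime_submodule Rg Mg sm P \<and> Q \<subseteq> P}
      = {p. graded_prime_ideal Rg p \<and> colon sm Q \<subseteq> p}"
  proof
    show "colon sm ` {P. graded_prime_submodule Rg Mg sm P \<and> Q \<subseteq> P}
      \<subseteq> {p. graded_prime_ideal Rg p \<and> colon sm Q \<subseteq> p}"
      using colon_prime unfolding colon_def by blast
    show "{p. graded_prime_ideal Rg p \<and> colon sm Q \<subseteq> p}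
      \<subseteq> colon sm ` {P. graded_prime_submodule Rg Mg sm P \<and> Q \<subseteq> P}"
      using pf unfolding graded_primeful_def by blast
  qed
  show ?thesis
    unfolding GrM_def colon_Inter eq rad_eq[OF colon_graded[OF Q]] ..
qed

lemma rad_hom_pow:
  assumes y: "y \<in> hom Rg" "y \<in> graded_radical Rg I" and I0: "0 \<in> I"
  shows "\<exists>n>0. y ^ n \<in> I"
proof -
  obtain h where yh: "y \<in> Rg h" using y unfolding hom_def by blast
  obtain c where c: "finsupp c" "\<forall>g. c g \<in> Rg g" "y = gsum c" "\<forall>g. \<exists>n>0. c g ^ n \<in> I"
    using y unfolding graded_radical_def by blast
  have "c = single h y" by (rule dd_hom[OF ddR R0 yh c(1-3)])
  then have "c h = y" by (simp add: single_def)
  then show ?thesis using c(4) by metis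
qed

lemma rad_pow_hom:
  assumes I: "graded_ideal Rg I" and y: "y \<in> hom Rg" and n: "n > 0"
    and yn: "y ^ n \<in> graded_radical Rg I"
  shows "y \<in> graded_radical Rg I"
  using yn prime_pow[OF _ y n] unfolding rad_eq[OF I] by blast

lemma qp_facts:
  assumes "Q \<in> qpSpec Rg Mg sm"
  shows "graded_submodule Mg sm Q" "Q \<noteq> UNIV" "graded_primeful Rg Mg sm Q"
    "\<And>r m. r \<in> hom Rg \<Longrightarrow> m \<in> hom Mg \<Longrightarrow> sm r m \<in> Q \<Longrightarrow>
        r \<in> graded_radical Rg (colon sm Q) \<or> m \<in> GrM Rg Mg sm Q"
  using assms unfolding qpSpec_def graded_quasi_primary_def by blast+

lemma rad_prime:
  assumes Qs: "Q \<in> qpSpec Rg Mg sm"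
  shows "graded_prime_ideal Rg (graded_radical Rg (colon sm Q))"
proof -
  note QF = qp_facts[OF Qs]
  let ?I = "colon sm Q"
  let ?G = "graded_radical Rg ?I"
  have I: "graded_ideal Rg ?I" using colon_graded[OF QF(1)] .
  have I0: "0 \<in> ?I" using gi_sub[OF I] as_zero by blast
  have eqG: "colon sm (GrM Rg Mg sm Q) = ?G" using colonGrM[OF QF(1) QF(3)] .
  have gi: "graded_ideal Rg ?G" using colon_graded[OF GrM_sub, of Q] eqG by simp
  have "1 \<notin> ?I" using QF(2) unfolding colon_def by (auto simp: sm_one)
  then obtain p where p: "graded_prime_ideal Rg p" "?I \<subseteq> p" "1 \<notin> p"
    using zorn_prime[OF I, of 1] by auto
  then have "1 \<notin> ?G" using rad_sub by blast
  then have U: "?G \<noteq> UNIV" by blast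
  have pr: "a \<in> ?G \<or> b \<in> ?G" if a: "a \<in> hom Rg" and b: "b \<in> hom Rg" and ab: "a * b \<in> ?G" for a b
  proof (cases "a \<in> ?G")
    case True then show ?thesis by blast
  next
    case na: False
    obtain n where n: "n > 0" "(a * b) ^ n \<in> ?I" using rad_hom_pow[OF hom_mult[OF a b] ab I0] by blast
    have an: "a ^ n \<notin> ?G" using rad_pow_hom[OF I a n(1)] na by blast
    have "sm (b ^ n) m \<in> GrM Rg Mg sm Q" for m
    proof (rule hom_all[OF gsub_sub[OF GrM_sub]])
      fix m assume m: "m \<in> hom Mg"
      have "sm (a ^ n) (sm (b ^ n) m) \<in> Q" using n(2) unfolding colon_def
        by (simp add: sm_mult[symmetric] power_mult_distrib)
      then show "sm (b ^ n) m \<in> GrM Rg Mg sm Q"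
        using QF(4)[OF hom_pow[OF a n(1)] hom_sm[OF hom_pow[OF b n(1)] m]] an by blast
    qed
    then have "b ^ n \<in> ?G" using eqG unfolding colon_def by blast
    then show ?thesis using rad_pow_hom[OF I b n(1)] by blast
  qed
  show ?thesis unfolding graded_prime_ideal_def using gi U pr by blast
qed

lemma phi_Union:
  assumes Qs: "Q \<in> qpSpec Rg Mg sm"
  shows "\<Union>(qp_phi Rg Mg sm Q) = graded_radical Rg (colon sm Q)"
proof -
  note QF = qp_facts[OF Qs]
  let ?N = "GrM Rg Mg sm Q"
  have NS: "add_subgroup ?N" using gsub_sub[OF GrM_sub] .
  have "\<Union>(qp_phi Rg Mg sm Q) = colon sm ?N"
  proof
    show "\<Union>(qp_phi Rg Mg sm Q) \<subseteq> colon sm ?N"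
    proof
      fix y assume "y \<in> \<Union>(qp_phi Rg Mg sm Q)"
      then obtain r a where y: "y = r + a" "r \<in> colon sm ?N" "a \<in> Ann sm"
        unfolding qp_phi_def by blast
      show "y \<in> colon sm ?N" using y unfolding colon_def Ann_def by (auto simp: sm_add_left)
    qed
    show "colon sm ?N \<subseteq> \<Union>(qp_phi Rg Mg sm Q)"
    proof
      fix r assume r: "r \<in> colon sm ?N"
      have "0 \<in> Ann sm" unfolding Ann_def colon_def by simp
      then have "r \<in> {r + a | a. a \<in> Ann sm}" by force
      then show "r \<in> \<Union>(qp_phi Rg Mg sm Q)" using r unfolding qp_phi_def by blast
    qed
  qed
  then show ?thesis using colonGrM[OF QF(1) QF(3)] by simp
qed

lemma phi_eq:
  assumes Qs: "Q \<in> qpSpec Rg Mg sm" and Ps: "P \<in> qpSpec Rg Mg sm"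
  shows "qp_phi Rg Mg sm Q = qp_phi Rg Mg sm P \<longleftrightarrow>
    graded_radical Rg (colon sm Q) = graded_radical Rg (colon sm P)"
proof
  assume "qp_phi Rg Mg sm Q = qp_phi Rg Mg sm P"
  then show "graded_radical Rg (colon sm Q) = graded_radical Rg (colon sm P)"
    using phi_Union[OF Qs] phi_Union[OF Ps] by simp
next
  assume "graded_radical Rg (colon sm Q) = graded_radical Rg (colon sm P)"
  then show "qp_phi Rg Mg sm Q = qp_phi Rg Mg sm P"
    unfolding qp_phi_def
    using colonGrM[OF qp_facts(1,3)[OF Qs]] colonGrM[OF qp_facts(1,3)[OF Ps]] by simp
qed

end



theorem theorem4p3:
  fixes Rg :: "'g::group_add \<Rightarrow> 'r::comm_ring_1 set"
    and Mg :: "'g \<Rightarrow> 'm::ab_group_add set"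
    and sm :: "'r \<Rightarrow> 'm \<Rightarrow> 'm"
  assumes "graded_module Rg Mg sm"
  shows "(qp_T0 Rg Mg sm
           \<longleftrightarrow> (\<forall>Q\<in>qpSpec Rg Mg sm. \<forall>P\<in>qpSpec Rg Mg sm.
                 qpV Rg Mg sm Q = qpV Rg Mg sm P \<longrightarrow> Q = P))
       \<and> (qp_T0 Rg Mg sm
           \<longleftrightarrow> (\<forall>p. graded_prime_ideal Rg p \<longrightarrow>
                 finite (qpSpec_at Rg Mg sm p) \<and> card (qpSpec_at Rg Mg sm p) \<le> 1))
       \<and> (qp_T0 Rg Mg sm \<longleftrightarrow> inj_on (qp_phi Rg Mg sm) (qpSpec Rg Mg sm))"
proof -
  interpret gmod Rg Mg sm using assms by (simp add: gmod_def)
  let ?S = "qpSpec Rg Mg sm"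
  define rad where "rad K = graded_radical Rg (colon sm K)" for K
  define INJ where "INJ \<longleftrightarrow> (\<forall>Q\<in>?S. \<forall>P\<in>?S. rad Q = rad P \<longrightarrow> Q = P)"
  have qpV_iff: "X \<in> qpV Rg Mg sm K \<longleftrightarrow> X \<in> ?S \<and> rad K \<subseteq> rad X" for X K
    unfolding qpV_def rad_def by blast
  have V: "qpV Rg Mg sm Q = qpV Rg Mg sm P \<longleftrightarrow> rad Q = rad P" if "Q \<in> ?S" "P \<in> ?S" for Q P
  proof
    assume e: "qpV Rg Mg sm Q = qpV Rg Mg sm P"
    have "Q \<in> qpV Rg Mg sm Q" "P \<in> qpV Rg Mg sm P" using that qpV_iff[of Q Q] qpV_iff[of P P] by simp_all
    then have "Q \<in> qpV Rg Mg sm P" "P \<in> qpV Rg Mg sm Q" using e by simp_all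
    then show "rad Q = rad P" using qpV_iff[of Q P] qpV_iff[of P Q] by blast
  next
    assume "rad Q = rad P"
    then show "qpV Rg Mg sm Q = qpV Rg Mg sm P" unfolding qpV_def rad_def by simp
  qed
  have c1: "(\<forall>Q\<in>?S. \<forall>P\<in>?S. qpV Rg Mg sm Q = qpV Rg Mg sm P \<longrightarrow> Q = P) \<longleftrightarrow> INJ"
  proof -
    have "(\<forall>Q\<in>?S. \<forall>P\<in>?S. qpV Rg Mg sm Q = qpV Rg Mg sm P \<longrightarrow> Q = P) \<longleftrightarrow>
      (\<forall>Q\<in>?S. \<forall>P\<in>?S. rad Q = rad P \<longrightarrow> Q = P)"
      using V by (intro ball_cong refl) simp
    then show ?thesis unfolding INJ_def .
  qed
  have T: "qp_T0 Rg Mg sm \<longleftrightarrow> INJ"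
  proof
    assume T0: "qp_T0 Rg Mg sm"
    show INJ unfolding INJ_def
    proof (intro ballI impI)
      fix Q P assume QP: "Q \<in> ?S" "P \<in> ?S" "rad Q = rad P"
      show "Q = P"
      proof (rule ccontr)
        assume "Q \<noteq> P"
        then obtain C where C: "qp_closed Rg Mg sm C" "Q \<in> C \<longleftrightarrow> P \<notin> C"
          using T0 QP unfolding qp_T0_def by blast
        then obtain K where "C = qpV Rg Mg sm K" unfolding qp_closed_def by blast
        then have "Q \<in> C \<longleftrightarrow> P \<in> C" using QP(3) QP(1,2) qpV_iff[of Q K] qpV_iff[of P K] by simp
        then show False using C(2) by blast
      qed
    qed
  next
    assume INJ
    show "qp_T0 Rg Mg sm" unfolding qp_T0_def
    proof (intro ballI impI)
      fix Q P assume QP: "Q \<in> ?S" "P \<in> ?S" "Q \<noteq> P"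
      then have ne: "rad Q \<noteq> rad P" using \<open>INJ\<close> unfolding INJ_def by blast
      have gQ: "graded_submodule Mg sm Q" "graded_submodule Mg sm P"
        using qp_facts(1) QP by blast+
      show "\<exists>C. qp_closed Rg Mg sm C \<and> (Q \<in> C \<longleftrightarrow> P \<notin> C)"
      proof (cases "rad Q \<subseteq> rad P")
        case True
        then have "\<not> rad P \<subseteq> rad Q" using ne by blast
        then have "(Q \<in> qpV Rg Mg sm P \<longleftrightarrow> P \<notin> qpV Rg Mg sm P)"
          using qpV_iff[of Q P] qpV_iff[of P P] QP by blast
        moreover have "qp_closed Rg Mg sm (qpV Rg Mg sm P)" unfolding qp_closed_def using gQ by blast
        ultimately show ?thesis by blast
      next
        case False
        then have "(Q \<in> qpV Rg Mg sm Q \<longleftrightarrow> P \<notin> qpV Rg Mg sm Q)"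
          using qpV_iff[of Q Q] qpV_iff[of P Q] QP by blast
        moreover have "qp_closed Rg Mg sm (qpV Rg Mg sm Q)" unfolding qp_closed_def using gQ by blast
        ultimately show ?thesis by blast
      qed
    qed
  qed
  have c3: "(\<forall>p. graded_prime_ideal Rg p \<longrightarrow>
                 finite (qpSpec_at Rg Mg sm p) \<and> card (qpSpec_at Rg Mg sm p) \<le> 1) \<longleftrightarrow> INJ"
  proof
    assume H: "\<forall>p. graded_prime_ideal Rg p \<longrightarrow>
                 finite (qpSpec_at Rg Mg sm p) \<and> card (qpSpec_at Rg Mg sm p) \<le> 1"
    show INJ unfolding INJ_def
    proof (intro ballI impI)
      fix Q P assume QP: "Q \<in> ?S" "P \<in> ?S" "rad Q = rad P"
      have pr: "graded_prime_ideal Rg (rad Q)" unfolding rad_def using rad_prime QP by blast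
      have "Q \<in> qpSpec_at Rg Mg sm (rad Q)" "P \<in> qpSpec_at Rg Mg sm (rad Q)"
        using QP unfolding qpSpec_at_def rad_def by auto
      moreover have "finite (qpSpec_at Rg Mg sm (rad Q))" "card (qpSpec_at Rg Mg sm (rad Q)) \<le> Suc 0"
        using H pr by auto
      ultimately show "Q = P" using card_le_Suc0_iff_eq[of "qpSpec_at Rg Mg sm (rad Q)"] by blast
    qed
  next
    assume INJ
    show "\<forall>p. graded_prime_ideal Rg p \<longrightarrow>
                 finite (qpSpec_at Rg Mg sm p) \<and> card (qpSpec_at Rg Mg sm p) \<le> 1"
    proof (intro allI impI)
      fix p
      have all: "\<forall>a\<in>qpSpec_at Rg Mg sm p. \<forall>b\<in>qpSpec_at Rg Mg sm p. a = b"
        using \<open>INJ\<close> unfolding INJ_def qpSpec_at_def rad_def by auto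
      have fin: "finite (qpSpec_at Rg Mg sm p)"
      proof (cases "qpSpec_at Rg Mg sm p = {}")
        case True then show ?thesis by simp
      next
        case False
        then obtain a where a: "a \<in> qpSpec_at Rg Mg sm p" by blast
        then have "qpSpec_at Rg Mg sm p \<subseteq> {a}" using all by blast
        then show ?thesis using finite_subset by blast
      qed
      then show "finite (qpSpec_at Rg Mg sm p) \<and> card (qpSpec_at Rg Mg sm p) \<le> 1"
        using card_le_Suc0_iff_eq[OF fin] all by simp
    qed
  qed
  have c4: "inj_on (qp_phi Rg Mg sm) ?S \<longleftrightarrow> INJ"
  proof -
    have "inj_on (qp_phi Rg Mg sm) ?S \<longleftrightarrow>
      (\<forall>Q\<in>?S. \<forall>P\<in>?S. qp_phi Rg Mg sm Q = qp_phi Rg Mg sm P \<longrightarrow> Q = P)"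
      unfolding inj_on_def by blast
    also have "\<dots> \<longleftrightarrow> INJ" unfolding INJ_def rad_def using phi_eq by (intro ball_cong refl) simp
    finally show ?thesis .
  qed
  show ?thesis using c1 c3 c4 T by simp
qed


end
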